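(* Let $\mathbb{K}$ be a perfect field, $I\subset\mathbb{K}[X_1,\dots,X_n]$ a zero-dimensional ideal, $Q=\mathbb{K}[X_1,\dots,X_n]/I$, and $P_{\min}\in\mathbb{K}[X_n]$ the minimal polynomial of $X_n$ in $Q$, factored as $P_{\min}=P_1^{e_1}\cdots P_K^{e_K}$ with the $P_k$ pairwise distinct irreducible polynomials and $e_k\ge1$. For $k\in\{1,\dots,K\}$ let $J_k=I+\langle P_k^{e_k}\rangle$, $Q_k=\mathbb{K}[X_1,\dots,X_n]/J_k$, $T_k=P_{\min}/P_k^{e_k}$, and define $\varphi_k:Q^*\to Q_k^*$ by $\varphi_k(\ell)(f)=\ell(T_k\hat f\bmod I)$, where $\hat f$ is any lift of $f\in Q_k$ to $\mathbb{K}[X_1,\dots,X_n]$. Then $\varphi_k$ is well defined, $\mathbb{K}$-linear and onto.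
   Context: $Q^*=\mathrm{Hom}_{\mathbb{K}}(Q,\mathbb{K})$ and $Q_k^*=\mathrm{Hom}_{\mathbb{K}}(Q_k,\mathbb{K})$. *)

theory Defs
  imports "HOL-Library.Poly_Mapping" "HOL-Computational_Algebra.Computational_Algebra"
begin

text \<open>Multivariate polynomials over 'a in the variables indexed by the (finite) type 'v:
  monomials are finitely supported exponent vectors, polynomials are finitely supported
  coefficient functions on monomials (convolution product from Poly_Mapping).\<close>
type_synonym ('v, 'a) mpoly = "('v \<Rightarrow>\<^sub>0 nat) \<Rightarrow>\<^sub>0 'a"

definition mconst :: "'a::zero \<Rightarrow> ('v, 'a) mpoly" where
  "mconst c = Poly_Mapping.single 0 c"

definition mvar :: "'v \<Rightarrow> ('v, 'a::{zero,one}) mpoly" where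
  "mvar v = Poly_Mapping.single (Poly_Mapping.single v 1) 1"

definition upoly_eval :: "'a::comm_ring_1 poly \<Rightarrow> 'v \<Rightarrow> ('v, 'a) mpoly" where
  "upoly_eval p v = poly (map_poly mconst p) (mvar v)"

definition is_ideal :: "'r::comm_ring_1 set \<Rightarrow> bool" where
  "is_ideal I \<longleftrightarrow> 0 \<in> I \<and> (\<forall>a\<in>I. \<forall>b\<in>I. a + b \<in> I) \<and> (\<forall>a\<in>I. \<forall>r. r * a \<in> I)"

definition zero_dimensional :: "('v, 'a::field) mpoly set \<Rightarrow> bool" where
  "zero_dimensional I \<longleftrightarrow> is_ideal I \<and> I \<noteq> UNIV \<and>
     (\<exists>B. finite B \<and> (\<forall>f. \<exists>c. f - (\<Sum>b\<in>B. mconst (c b) * b) \<in> I))"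

definition perfect_field :: "'a::field itself \<Rightarrow> bool" where
  "perfect_field _ \<longleftrightarrow> CHAR('a) = 0 \<or> (\<forall>x::'a. \<exists>y. y ^ CHAR('a) = x)"

definition is_min_poly :: "('v, 'a::field) mpoly set \<Rightarrow> 'v \<Rightarrow> 'a poly \<Rightarrow> bool" where
  "is_min_poly I v p \<longleftrightarrow> lead_coeff p = 1 \<and> upoly_eval p v \<in> I \<and>
     (\<forall>q. q \<noteq> 0 \<and> upoly_eval q v \<in> I \<longrightarrow> degree p \<le> degree q)"

definition k_linear :: "(('v, 'a::field) mpoly \<Rightarrow> 'a) \<Rightarrow> bool" where
  "k_linear l \<longleftrightarrow> (\<forall>f g. l (f + g) = l f + l g) \<and> (\<forall>c f. l (mconst c * f) = c * l f)"

text \<open>The dual (K[X]/I)^* , identified with the K-linear functionals on K[X] vanishing on I.\<close>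
definition quot_dual :: "('v, 'a::field) mpoly set \<Rightarrow> (('v, 'a) mpoly \<Rightarrow> 'a) set" where
  "quot_dual I = {l. k_linear l \<and> (\<forall>f\<in>I. l f = 0)}"

definition ideal_plus :: "'r::comm_ring_1 set \<Rightarrow> 'r \<Rightarrow> 'r set" where
  "ideal_plus I g = {a + r * g | a r. a \<in> I}"

definition phi :: "('v, 'a::field) mpoly \<Rightarrow> (('v, 'a) mpoly \<Rightarrow> 'a) \<Rightarrow> (('v, 'a) mpoly \<Rightarrow> 'a)" where
  "phi T l = (\<lambda>f. l (T * f))"

end

theory Submission
  imports Defs
begin

lemma mconst_add: "mconst (a + b) = mconst a + mconst b"
  by (simp add: mconst_def single_add)

lemma mconst_mult: "mconst ((a::'a::comm_ring_1) * b) = (mconst a * mconst b :: ('v,'a) mpoly)"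
  by (simp add: mconst_def mult_single)

lemma mconst_0 [simp]: "mconst 0 = 0"
  by (simp add: mconst_def)

lemma upoly_eval_pCons:
  "upoly_eval (pCons a p) v = mconst a + mvar v * upoly_eval p v"
  unfolding upoly_eval_def by (simp add: map_poly_pCons)

lemma upoly_eval_0 [simp]: "upoly_eval 0 v = 0"
  by (simp add: upoly_eval_def)

lemma upoly_eval_add:
  "upoly_eval (p + q) v = upoly_eval p v + upoly_eval q v"
  by (induction p q rule: poly_induct2) (simp_all add: upoly_eval_pCons mconst_add algebra_simps)

lemma upoly_eval_smult:
  "upoly_eval (smult (a::'a::comm_ring_1) q) v = mconst a * (upoly_eval q v :: ('v,'a) mpoly)"
proof (induction q)
  case 0 then show ?case by simp
next
  case (pCons b q)
  then show ?case by (simp add: upoly_eval_pCons mconst_mult algebra_simps)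
qed

lemma upoly_eval_mult:
  "upoly_eval ((p::'a::comm_ring_1 poly) * q) v = (upoly_eval p v * upoly_eval q v :: ('v,'a) mpoly)"
proof (induction p)
  case 0 then show ?case by simp
next
  case (pCons a p)
  have "pCons a p * q = smult a q + pCons 0 (p * q)" by simp
  then show ?case using pCons
    by (simp add: upoly_eval_add upoly_eval_smult upoly_eval_pCons algebra_simps)
qed

lemma upoly_eval_1: "upoly_eval 1 v = (1 :: ('v,'a::comm_ring_1) mpoly)"
  by (simp add: upoly_eval_def mconst_def)

definition bez :: "'r::comm_ring_1 \<Rightarrow> 'r \<Rightarrow> bool" where
  "bez a c \<longleftrightarrow> (\<exists>u w. u * a + w * c = 1)"

lemma bez_sym: "bez a c \<Longrightarrow> bez c a"
  unfolding bez_def by (metis add.commute)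

lemma bez_one: "bez 1 c"
  unfolding bez_def by (rule exI[of _ 1], rule exI[of _ 0]) simp

lemma bez_mult: assumes "bez a c" "bez b c" shows "bez (a * b) c"
proof -
  obtain u1 w1 where 1: "u1 * a + w1 * c = 1" using assms(1) by (auto simp: bez_def)
  obtain u2 w2 where 2: "u2 * b + w2 * c = 1" using assms(2) by (auto simp: bez_def)
  have "(u1 * a + w1 * c) * (u2 * b + w2 * c) = 1" using 1 2 by simp
  hence "(u1 * u2) * (a * b) + (u1 * a * w2 + w1 * u2 * b + w1 * w2 * c) * c = 1"
    by (simp add: algebra_simps)
  thus ?thesis unfolding bez_def by blast
qed

lemma bez_power: "bez a c \<Longrightarrow> bez (a ^ n) c"
  by (induction n) (simp_all add: bez_one bez_mult)

lemma bez_prod: "finite A \<Longrightarrow> (\<And>i. i \<in> A \<Longrightarrow> bez (f i) c) \<Longrightarrow> bez (prod f A) c"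
  by (induction A rule: finite_induct) (simp_all add: bez_one bez_mult)

lemma poly_bezout:
  fixes a b :: "'a::field poly"
  assumes a0: "a \<noteq> 0" and cd: "\<And>d. d dvd a \<Longrightarrow> d dvd b \<Longrightarrow> is_unit d"
  shows "bez a b"
proof -
  define S where "S = (\<lambda>p. p \<noteq> 0 \<and> (\<exists>u w. p = u * a + w * b))"
  have "a = 1 * a + 0 * b" by simp
  hence "S a" unfolding S_def using a0 by blast
  then obtain d where dS: "S d" and dmin: "\<And>p. S p \<Longrightarrow> degree d \<le> degree p"
    using ex_has_least_nat[of S a degree] by blast
  from dS obtain u w where d0: "d \<noteq> 0" and d: "d = u * a + w * b" unfolding S_def by blast
  have dvd_gen: "d dvd x" if x: "x = u' * a + w' * b" for x u' w'
  proof (rule ccontr)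
    assume nd: "\<not> d dvd x"
    have "x mod d = x - x div d * d" by (simp add: minus_div_mult_eq_mod)
    also have "\<dots> = (u' - x div d * u) * a + (w' - x div d * w) * b"
      unfolding x d by (simp add: algebra_simps)
    finally have "S (x mod d)" unfolding S_def using nd by (auto simp: dvd_eq_mod_eq_0)
    hence "degree d \<le> degree (x mod d)" by (rule dmin)
    moreover have "degree (x mod d) < degree d" using degree_mod_less_degree[OF d0 nd] .
    ultimately show False by simp
  qed
  have "d dvd a" by (rule dvd_gen[of a 1 0]) simp
  moreover have "d dvd b" by (rule dvd_gen[of b 0 1]) simp
  ultimately have "is_unit d" by (rule cd)
  then obtain c where "1 = d * c" by (auto elim: dvdE)
  hence "(c * u) * a + (c * w) * b = 1" unfolding d by (simp add: algebra_simps)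
  thus ?thesis unfolding bez_def by blast
qed

lemma irred_bez:
  fixes p q :: "'a::field poly"
  assumes ip: "irreducible p" and iq: "irreducible q"
    and mp: "lead_coeff p = 1" and mq: "lead_coeff q = 1" and ne: "p \<noteq> q"
  shows "bez p q"
proof (rule poly_bezout)
  show "p \<noteq> 0" using ip by auto
  fix d assume dp: "d dvd p" and dq: "d dvd q"
  show "is_unit d"
  proof (rule ccontr)
    assume nu: "\<not> is_unit d"
    from dp obtain c where pc: "p = d * c" by (auto elim: dvdE)
    with ip nu have "is_unit c" by (auto simp: irreducible_def)
    hence "p dvd d" unfolding pc by (simp add: mult_unit_dvd_iff)
    hence "p dvd q" using dq by (rule dvd_trans)
    then obtain f where qf: "q = p * f" by (auto elim: dvdE)
    have "\<not> is_unit p" using ip by (simp add: irreducible_def)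
    with iq qf have fu: "is_unit f" by (auto simp: irreducible_def)
    then obtain c0 where f: "f = [:c0:]" by (auto elim: is_unit_polyE)
    have "lead_coeff q = lead_coeff p * lead_coeff f" unfolding qf by (simp add: lead_coeff_mult)
    hence "c0 = 1" using mp mq f by simp
    hence "q = p" using qf f by simp
    with ne show False by simp
  qed
qed

theorem lemma8:
  fixes I :: "('v::finite, 'a::field) mpoly set"
    and xn :: 'v
    and Pmin :: "'a poly" and P :: "nat \<Rightarrow> 'a poly" and e :: "nat \<Rightarrow> nat"
    and K k :: nat
  assumes perf: "perfect_field TYPE('a)"
    and zd: "zero_dimensional I"
    and minp: "is_min_poly I xn Pmin"
    and irr: "\<forall>i\<in>{1..K}. irreducible (P i) \<and> lead_coeff (P i) = 1 \<and> e i \<ge> 1"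
    and dist: "inj_on P {1..K}"
    and fact: "Pmin = (\<Prod>i=1..K. P i ^ e i)"
    and k: "k \<in> {1..K}"
  defines "J \<equiv> ideal_plus I (upoly_eval (P k ^ e k) xn)"
    and "T \<equiv> Pmin div (P k ^ e k)"
  shows "(\<forall>l\<in>quot_dual I. phi (upoly_eval T xn) l \<in> quot_dual J)
    \<and> (\<forall>l1\<in>quot_dual I. \<forall>l2\<in>quot_dual I. \<forall>c a.
          phi (upoly_eval T xn) (\<lambda>f. c * l1 f + a * l2 f)
          = (\<lambda>f. c * phi (upoly_eval T xn) l1 f + a * phi (upoly_eval T xn) l2 f))
    \<and> quot_dual J \<subseteq> phi (upoly_eval T xn) ` quot_dual I"
proof -
  define Q where "Q = P k ^ e k"
  define R where "R = (\<Prod>i\<in>{1..K}-{k}. P i ^ e i)"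
  have "irreducible (P k)" using irr k by blast
  hence Pk0: "P k \<noteq> 0" by (simp add: irreducible_def)
  have PR: "Pmin = Q * R" unfolding fact Q_def R_def
    using k by (simp add: prod.remove)
  have TR: "T = R" unfolding T_def PR Q_def[symmetric] using Pk0 Q_def by simp
  have cop: "bez R Q" unfolding R_def Q_def
  proof (rule bez_prod, simp)
    fix i assume i: "i \<in> {1..K} - {k}"
    have "P i \<noteq> P k" using dist i k by (auto dest: inj_onD)
    hence "bez (P i) (P k)" using irr i k by (intro irred_bez) auto
    hence "bez (P k ^ e k) (P i)" by (rule bez_power[OF bez_sym])
    then show "bez (P i ^ e i) (P k ^ e k)" by (rule bez_power[OF bez_sym])
  qed
  then obtain u w where bez: "u * R + w * Q = 1" by (auto simp: bez_def)
  define t where "t = upoly_eval T xn"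
  define q where "q = upoly_eval Q xn"
  define u' where "u' = upoly_eval u xn"
  define w' where "w' = upoly_eval w xn"
  have bez': "u' * t + w' * q = 1"
    using arg_cong[OF bez, of "\<lambda>p. upoly_eval p xn"]
    unfolding u'_def t_def w'_def q_def TR by (simp add: upoly_eval_add upoly_eval_mult upoly_eval_1)
  have idl: "is_ideal I" using zd by (simp add: zero_dimensional_def)
  have I0: "0 \<in> I" and Iadd: "\<And>a b. a \<in> I \<Longrightarrow> b \<in> I \<Longrightarrow> a + b \<in> I"
    and Imul: "\<And>a r. a \<in> I \<Longrightarrow> r * a \<in> I"
    using idl by (auto simp: is_ideal_def)
  have tq: "t * q \<in> I"
    using minp unfolding is_min_poly_def t_def q_def TR
    by (simp add: PR upoly_eval_mult mult.commute)
  have J_eq: "J = {a + r * q | a r. a \<in> I}" unfolding J_def ideal_plus_def q_def Q_def by simp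
  have IJ: "I \<subseteq> J"
  proof
    fix x assume "x \<in> I"
    moreover have "x = x + 0 * q" by simp
    ultimately show "x \<in> J" unfolding J_eq by blast
  qed
  have qJ: "\<And>r. r * q \<in> J" unfolding J_eq using I0 by force
  have part1: "\<forall>l\<in>quot_dual I. phi t l \<in> quot_dual J"
  proof
    fix l assume l: "l \<in> quot_dual I"
    hence lin: "k_linear l" and van: "\<And>f. f \<in> I \<Longrightarrow> l f = 0" by (auto simp: quot_dual_def)
    have "k_linear (phi t l)" using lin unfolding k_linear_def phi_def
      by (simp add: distrib_left) (metis mult.left_commute)
    moreover have "\<forall>f\<in>J. phi t l f = 0"
    proof
      fix f assume "f \<in> J"
      then obtain a r where f: "f = a + r * q" "a \<in> I" unfolding J_eq by auto
      have "t * f = t * a + r * (t * q)" unfolding f by (simp add: algebra_simps)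
      moreover have "t * a + r * (t * q) \<in> I" using f Imul Iadd tq by blast
      ultimately show "phi t l f = 0" unfolding phi_def using van by simp
    qed
    ultimately show "phi t l \<in> quot_dual J" by (simp add: quot_dual_def)
  qed
  have part3: "quot_dual J \<subseteq> phi t ` quot_dual I"
  proof
    fix m assume m: "m \<in> quot_dual J"
    hence lin: "k_linear m" and van: "\<And>f. f \<in> J \<Longrightarrow> m f = 0" by (auto simp: quot_dual_def)
    have madd: "\<And>f g. m (f + g) = m f + m g" using lin by (simp add: k_linear_def)
    define l where "l = (\<lambda>f. m (u' * f))"
    have "k_linear l" using lin unfolding k_linear_def l_def
      by (simp add: distrib_left) (metis mult.left_commute)
    moreover have "\<forall>f\<in>I. l f = 0" unfolding l_def using Imul IJ van by blast
    ultimately have lI: "l \<in> quot_dual I" by (simp add: quot_dual_def)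
    have "phi t l = m"
    proof
      fix f
      have "f = u' * (t * f) + (w' * f) * q" using bez'
        by (metis (no_types, lifting) mult.assoc mult.commute mult_1 distrib_right)
      hence "m f = m (u' * (t * f)) + m ((w' * f) * q)" using madd by metis
      also have "m ((w' * f) * q) = 0" using qJ van by blast
      finally show "phi t l f = m f" unfolding phi_def l_def by simp
    qed
    then show "m \<in> phi t ` quot_dual I" using lI by blast
  qed
  show ?thesis using part1 part3 unfolding t_def[symmetric] by (simp add: phi_def)
qed

end
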